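(* Let $\mathcal{G}=(V,L)$ be a finite connected undirected graph with monitor set $M$ and non-monitor set $N=V\setminus M$, $\sigma=|N|$, and let $P$ be a given set of measurement paths between monitors (Uncontrollable Probing). A set $S\subseteq N$ is $\sigma$-identifiable if and only if $\mathrm{MSC}(v)=\sigma$ for every $v\in S$.
   Context: A failure set is any $F\subseteq N$; a path fails iff it traverses a node of $F$. $P_F$ is the set of paths in $P$ traversing a node of $F$; $F_1,F_2$ distinguishable iff $P_{F_1}\ne P_{F_2}$. $S\subseteq N$ is $k$-identifiable if any two failure sets $F_1,F_2$ with $|F_1|,|F_2|\le k$ and $F_1\cap S\ne F_2\cap S$ are distinguishable. For $v\in N$, $P_v$ is the set of paths in $P$ traversing $v$. $\mathrm{MSC}(v)$ is the minimum cardinality of a set $V'\subseteq N\setminus\{v\}$ with $P_v\subseteq\bigcup_{w\in V'}P_w$; if no such $V'$ exists (e.g. when $v$ lies on a two-hop measurement path monitor–$v$–monitor), $\mathrm{MSC}(v):=\sigma$. *)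

theory Defs
  imports Main
begin

definition undirected_graph :: "'a set \<Rightarrow> ('a \<Rightarrow> 'a \<Rightarrow> bool) \<Rightarrow> bool" where
  "undirected_graph V E \<longleftrightarrow> finite V \<and>
     (\<forall>x y. E x y \<longrightarrow> x \<in> V \<and> y \<in> V) \<and>
     (\<forall>x y. E x y \<longrightarrow> E y x) \<and> (\<forall>x. \<not> E x x)"

definition graph_connected :: "'a set \<Rightarrow> ('a \<Rightarrow> 'a \<Rightarrow> bool) \<Rightarrow> bool" where
  "graph_connected V E \<longleftrightarrow>
     (\<forall>u\<in>V. \<forall>v\<in>V. (u, v) \<in> {(x, y). E x y}\<^sup>*)"

definition measurement_path ::
  "'a set \<Rightarrow> ('a \<Rightarrow> 'a \<Rightarrow> bool) \<Rightarrow> 'a set \<Rightarrow> 'a list \<Rightarrow> bool" where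
  "measurement_path V E M p \<longleftrightarrow> p \<noteq> [] \<and> set p \<subseteq> V \<and> distinct p \<and>
     (\<forall>i. Suc i < length p \<longrightarrow> E (p ! i) (p ! Suc i)) \<and>
     hd p \<in> M \<and> last p \<in> M"

definition paths_through :: "'a list set \<Rightarrow> 'a \<Rightarrow> 'a list set" where
  "paths_through P v = {p \<in> P. v \<in> set p}"

definition paths_failing :: "'a list set \<Rightarrow> 'a set \<Rightarrow> 'a list set" where
  "paths_failing P F = {p \<in> P. set p \<inter> F \<noteq> {}}"

definition distinguishable :: "'a list set \<Rightarrow> 'a set \<Rightarrow> 'a set \<Rightarrow> bool" where
  "distinguishable P F1 F2 \<longleftrightarrow> paths_failing P F1 \<noteq> paths_failing P F2"

definition k_identifiable :: "'a set \<Rightarrow> 'a list set \<Rightarrow> nat \<Rightarrow> 'a set \<Rightarrow> bool" where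
  "k_identifiable N P k S \<longleftrightarrow>
     (\<forall>F1 F2. F1 \<subseteq> N \<longrightarrow> F2 \<subseteq> N \<longrightarrow> card F1 \<le> k \<longrightarrow> card F2 \<le> k \<longrightarrow>
        F1 \<inter> S \<noteq> F2 \<inter> S \<longrightarrow> distinguishable P F1 F2)"

definition covers :: "'a list set \<Rightarrow> 'a \<Rightarrow> 'a set \<Rightarrow> bool" where
  "covers P v V' \<longleftrightarrow> paths_through P v \<subseteq> (\<Union>w\<in>V'. paths_through P w)"

definition MSC :: "'a set \<Rightarrow> 'a list set \<Rightarrow> 'a \<Rightarrow> nat" where
  "MSC N P v = (if \<exists>V'. V' \<subseteq> N - {v} \<and> covers P v V'
                then (LEAST n. \<exists>V'. V' \<subseteq> N - {v} \<and> covers P v V' \<and> card V' = n)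
                else card N)"

end

theory Submission imports Defs begin
lemma covers_mono: "covers P v A \<Longrightarrow> A \<subseteq> B \<Longrightarrow> covers P v B"
  unfolding covers_def by blast

lemma MSC_iff:
  assumes fin: "finite N" and vN: "v \<in> N"
  shows "MSC N P v = card N \<longleftrightarrow> \<not> covers P v (N - {v})"
proof
  assume h: "MSC N P v = card N"
  show "\<not> covers P v (N - {v})"
  proof
    assume c: "covers P v (N - {v})"
    have ex: "\<exists>V'. V' \<subseteq> N - {v} \<and> covers P v V'" using c by (intro exI[of _ "N - {v}"]) simp
    have le: "(LEAST n. \<exists>V'. V' \<subseteq> N - {v} \<and> covers P v V' \<and> card V' = n) \<le> card (N - {v})"
      by (rule Least_le) (intro exI[of _ "N - {v}"] conjI c order_refl refl)
    have lt: "card (N - {v}) < card N" by (rule card_Diff1_less[OF fin vN])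
    have "MSC N P v = (LEAST n. \<exists>V'. V' \<subseteq> N - {v} \<and> covers P v V' \<and> card V' = n)"
      unfolding MSC_def using ex by (rule if_P)
    with le lt h show False by linarith
  qed
next
  assume nc: "\<not> covers P v (N - {v})"
  have "\<not> (\<exists>V'. V' \<subseteq> N - {v} \<and> covers P v V')"
  proof
    assume "\<exists>V'. V' \<subseteq> N - {v} \<and> covers P v V'"
    then obtain V' where "V' \<subseteq> N - {v}" "covers P v V'" by blast
    thus False using nc covers_mono by metis
  qed
  thus "MSC N P v = card N" unfolding MSC_def by (rule if_not_P)
qed
theorem proposition5:
  fixes V :: "'a set" and E :: "'a \<Rightarrow> 'a \<Rightarrow> bool" and M :: "'a set"
    and P :: "'a list set" and S :: "'a set"
  assumes "undirected_graph V E"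
    and "graph_connected V E"
    and "M \<subseteq> V"
    and "\<forall>p\<in>P. measurement_path V E M p"
    and "S \<subseteq> V - M"
  shows "k_identifiable (V - M) P (card (V - M)) S \<longleftrightarrow>
         (\<forall>v\<in>S. MSC (V - M) P v = card (V - M))"
proof -
  define N where "N = V - M"
  have fin: "finite N" using assms(1) unfolding N_def undirected_graph_def by simp
  have SN: "S \<subseteq> N" using assms(5) N_def by simp
  have "k_identifiable N P (card N) S \<longleftrightarrow> (\<forall>v\<in>S. \<not> covers P v (N - {v}))"
  proof
    assume k: "k_identifiable N P (card N) S"
    show "\<forall>v\<in>S. \<not> covers P v (N - {v})"
    proof (intro ballI notI)
      fix v assume vS: "v \<in> S" and c: "covers P v (N - {v})"
      have "card (N - {v}) \<le> card N" using fin by (simp add: card_mono)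
      moreover have "N \<inter> S \<noteq> (N - {v}) \<inter> S" using vS SN by blast
      ultimately have d: "distinguishable P N (N - {v})"
        using k unfolding k_identifiable_def by (meson Diff_subset order_refl)
      have "paths_failing P N = paths_failing P (N - {v})"
        using c SN vS unfolding paths_failing_def covers_def paths_through_def by blast
      thus False using d unfolding distinguishable_def by simp
    qed
  next
    assume h: "\<forall>v\<in>S. \<not> covers P v (N - {v})"
    show "k_identifiable N P (card N) S"
      unfolding k_identifiable_def
    proof (intro allI impI)
      fix F1 F2 assume F1: "F1 \<subseteq> N" and F2: "F2 \<subseteq> N" and "card F1 \<le> card N" "card F2 \<le> card N"
        and ne: "F1 \<inter> S \<noteq> F2 \<inter> S"
      have key: "\<And>A B v. A \<subseteq> N \<Longrightarrow> B \<subseteq> N \<Longrightarrow> v \<in> A \<Longrightarrow> v \<in> S \<Longrightarrow> v \<notin> B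
                  \<Longrightarrow> paths_failing P A \<noteq> paths_failing P B"
      proof -
        fix A B v assume A: "A \<subseteq> N" and B: "B \<subseteq> N" and vA: "v \<in> A" and vS: "v \<in> S" and vB: "v \<notin> B"
        from h vS have "\<not> covers P v (N - {v})" by blast
        then obtain p where p: "p \<in> P" "v \<in> set p" "\<forall>w\<in>N - {v}. w \<notin> set p"
          unfolding covers_def paths_through_def by auto
        have "p \<in> paths_failing P A" using p vA unfolding paths_failing_def by blast
        moreover have "p \<notin> paths_failing P B" using p B vB unfolding paths_failing_def by blast
        ultimately show "paths_failing P A \<noteq> paths_failing P B" by blast
      qed
      from ne obtain v where "v \<in> S" "(v \<in> F1 \<and> v \<notin> F2) \<or> (v \<in> F2 \<and> v \<notin> F1)" by blast
      thus "distinguishable P F1 F2" unfolding distinguishable_def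
        using key[OF F1 F2] key[OF F2 F1] by auto
    qed
  qed
  moreover have "(\<forall>v\<in>S. MSC N P v = card N) \<longleftrightarrow> (\<forall>v\<in>S. \<not> covers P v (N - {v}))"
    using MSC_iff[OF fin] SN by blast
  ultimately show ?thesis using N_def by simp
qed

end
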